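(* Let $\ell\in\{1,2\}$. For each wavenumber $k>0$ let ${\cal H}\subset{\cal H}_0$, $a_\ell=a_\ell^{(k)}$, $C_{{\rm G1},\ell}$, $C_{{\rm G2},\ell}$, ${\mathcal A}_\ell={\mathcal A}_\ell^{(k)}$ be as in the context (the standing assumptions there hold), with ${\mathcal A}_\ell$ invertible. Suppose that given $k_0>0$ there exists $c>0$ such that $\|{\mathcal A}_\ell^{-1}\|_{{\cal H}_0\to{\cal H}}\ge c$ for all $k\ge k_0$. Given $p\in\mathbb{Z}^+$, let $({\cal H}_h)_{h>0}$ be a family of finite-dimensional subspaces of ${\cal H}$, and let $\Pi_h:{\cal H}\to{\cal H}_h$ be the ${\cal H}$-orthogonal projection. Suppose there exist $C_1,C_2,C_3>0$ such that, whenever $(kh)^{2p}\|{\mathcal A}_\ell^{-1}\|_{{\cal H}_0\to{\cal H}}\le C_1$, the following hold: for all $u\in{\cal H}$ and $u_h\in{\cal H}_h$ satisfying $a_\ell(u-u_h,v_h)=0$ for all $v_h\in{\cal H}_h$, $$\|u-u_h\|_{{\cal H}}\le C_2\Big(1+(kh)^p\|{\mathcal A}_\ell^{-1}\|_{{\cal H}_0\to{\cal H}}\Big)\|(I-\Pi_h)u\|_{{\cal H}},$$ and $$\|(I-\Pi_h){\mathcal A}_\ell^{-1}\|_{{\cal H}_0\to{\cal H}}\le C_3\Big(kh+(kh)^p\|{\mathcal A}_\ell^{-1}\|_{{\cal H}_0\to{\cal H}}\Big).$$ Then, given $0<\varepsilon\le C_1$, there exists $C_4>0$ such that if $(kh)^{2p}\|{\mathcal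 A}_\ell^{-1}\|_{{\cal H}_0\to{\cal H}}\le\varepsilon$ (and $k\ge k_0$), then $$\inf_{u_h\in{\cal H}_h\setminus\{0\}}\sup_{v_h\in{\cal H}_h\setminus\{0\}}\frac{|a_\ell(u_h,v_h)|}{\|u_h\|_{{\cal H}}\|v_h\|_{{\cal H}}}\ge\frac{1}{(C_{{\rm G1},\ell})^{-1}\Big(1+C_{{\rm G2},\ell}(1+C_2C_3C_4)\|{\mathcal A}_\ell^{-1}\|_{{\cal H}_0\to{\cal H}}\Big)}.$$
   Context: Standing assumptions: ${\cal H}\subset{\cal H}_0$ are complex Hilbert spaces with $\|v\|_{{\cal H}_0}\le\|v\|_{{\cal H}}$ for $v\in{\cal H}$, and ${\cal H}_0$ is identified with its dual so that ${\cal H}\subset{\cal H}_0\subset{\cal H}^*$. ${\mathcal D}:{\cal H}\to{\cal H}_0$ is linear with $\|{\mathcal D}\|_{{\cal H}\to{\cal H}_0}\le 1$; $b(\cdot,\cdot)$ is a continuous sesquilinear form on ${\cal H}$; for $\ell=1,2$, $\mu_\ell^{-1}:{\cal H}_0\to{\cal H}_0$ and $\epsilon_\ell:{\cal H}_0\to{\cal H}_0$ are bounded linear operators, and $a_\ell(u,v):=(\mu_\ell^{-1}{\mathcal D}u,{\mathcal D}v)_{{\cal H}_0}+b(u,v)-(\epsilon_\ell u,v)_{{\cal H}_0}$ (these objects may depend on the parameter $k$). For $\ell=1,2$ there exist $C_{{\rm G1},\ell},C_{{\rm G2},\ell}>0$ with $|a_\ell(v,v)+C_{{\rm G2},\ell}\|v\|_{{\cal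 H}_0}^2|\ge C_{{\rm G1},\ell}\|v\|_{{\cal H}}^2$ for all $v\in{\cal H}$. ${\mathcal A}_\ell:{\cal H}\to{\cal H}^*$ is defined by $\langle{\mathcal A}_\ell u,v\rangle_{{\cal H}^*\times{\cal H}}=a_\ell(u,v)$, and $\|{\mathcal A}_\ell^{-1}\|_{{\cal H}_0\to{\cal H}}$ is the norm of ${\mathcal A}_\ell^{-1}$ restricted to ${\cal H}_0\subset{\cal H}^*$ as a map into ${\cal H}$. *)

theory Defs
  imports "HOL-Analysis.Analysis" "HOL-Library.Extended_Real"
begin

class cvector = ab_group_add +
  fixes scaleC :: "complex \<Rightarrow> 'a \<Rightarrow> 'a" (infixr "*\<^sub>C" 75)
  assumes scaleC_add_right: "c *\<^sub>C (x + y) = c *\<^sub>C x + c *\<^sub>C y"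
    and scaleC_add_left: "(c + d) *\<^sub>C x = c *\<^sub>C x + d *\<^sub>C x"
    and scaleC_scaleC: "c *\<^sub>C (d *\<^sub>C x) = (c * d) *\<^sub>C x"
    and scaleC_one: "1 *\<^sub>C x = x"

definition clin :: "('a::cvector \<Rightarrow> 'b::cvector) \<Rightarrow> bool" where
  "clin T \<longleftrightarrow> (\<forall>x y. T (x + y) = T x + T y) \<and> (\<forall>c x. T (c *\<^sub>C x) = c *\<^sub>C T x)"

definition antilin :: "('a::cvector \<Rightarrow> complex) \<Rightarrow> bool" where
  "antilin F \<longleftrightarrow> (\<forall>x y. F (x + y) = F x + F y) \<and> (\<forall>c x. F (c *\<^sub>C x) = cnj c * F x)"

definition sesq :: "('a::cvector \<Rightarrow> 'a \<Rightarrow> complex) \<Rightarrow> bool" where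
  "sesq s \<longleftrightarrow> (\<forall>u v w. s (u + v) w = s u w + s v w) \<and> (\<forall>c u w. s (c *\<^sub>C u) w = c * s u w)
     \<and> (\<forall>u v w. s u (v + w) = s u v + s u w) \<and> (\<forall>c u w. s u (c *\<^sub>C w) = cnj c * s u w)"

definition inner_prod :: "('a::cvector \<Rightarrow> 'a \<Rightarrow> complex) \<Rightarrow> bool" where
  "inner_prod ip \<longleftrightarrow> sesq ip \<and> (\<forall>x y. ip y x = cnj (ip x y)) \<and> (\<forall>x. x \<noteq> 0 \<longrightarrow> 0 < Re (ip x x))"

definition ipnorm :: "('a::cvector \<Rightarrow> 'a \<Rightarrow> complex) \<Rightarrow> 'a \<Rightarrow> real" where
  "ipnorm ip x = sqrt (Re (ip x x))"

definition hilbert :: "('a::cvector \<Rightarrow> 'a \<Rightarrow> complex) \<Rightarrow> bool" where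
  "hilbert ip \<longleftrightarrow> inner_prod ip \<and>
     (\<forall>X::nat \<Rightarrow> 'a. (\<forall>e>0. \<exists>N. \<forall>m\<ge>N. \<forall>n\<ge>N. ipnorm ip (X m - X n) < e)
        \<longrightarrow> (\<exists>L. (\<lambda>n. ipnorm ip (X n - L)) \<longlonglongrightarrow> 0))"

definition bdd_op :: "('a::cvector \<Rightarrow> real) \<Rightarrow> ('b::cvector \<Rightarrow> real) \<Rightarrow> ('a \<Rightarrow> 'b) \<Rightarrow> bool" where
  "bdd_op nX nY T \<longleftrightarrow> clin T \<and> (\<exists>C. \<forall>x. nY (T x) \<le> C * nX x)"

definition opnorm :: "('a::cvector \<Rightarrow> real) \<Rightarrow> ('b::cvector \<Rightarrow> real) \<Rightarrow> ('a \<Rightarrow> 'b) \<Rightarrow> real" where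
  "opnorm nX nY T = (SUP x. nY (T x) / nX x)"

definition bdd_sesq :: "('a::cvector \<Rightarrow> real) \<Rightarrow> ('a \<Rightarrow> 'a \<Rightarrow> complex) \<Rightarrow> bool" where
  "bdd_sesq n s \<longleftrightarrow> sesq s \<and> (\<exists>C. \<forall>u v. cmod (s u v) \<le> C * n u * n v)"

text \<open>Elements of the antidual H^*: bounded antilinear functionals.\<close>
definition dual_elem :: "('a::cvector \<Rightarrow> real) \<Rightarrow> ('a \<Rightarrow> complex) \<Rightarrow> bool" where
  "dual_elem n F \<longleftrightarrow> antilin F \<and> (\<exists>C. \<forall>v. cmod (F v) \<le> C * n v)"

text \<open>Standing assumptions of the context, for one fixed k and one fixed l.
  J is the inclusion H into H0 (injective, norm-nonincreasing); the last condition
  on J says H0 embeds injectively in H^* (identification H subset H0 subset H^*).\<close>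
definition standing_assms ::
  "('h::cvector \<Rightarrow> 'h \<Rightarrow> complex) \<Rightarrow> ('g::cvector \<Rightarrow> 'g \<Rightarrow> complex) \<Rightarrow> ('h \<Rightarrow> 'g) \<Rightarrow> ('h \<Rightarrow> 'g)
   \<Rightarrow> ('h \<Rightarrow> 'h \<Rightarrow> complex) \<Rightarrow> ('g \<Rightarrow> 'g) \<Rightarrow> ('g \<Rightarrow> 'g) \<Rightarrow> ('h \<Rightarrow> 'h \<Rightarrow> complex)
   \<Rightarrow> real \<Rightarrow> real \<Rightarrow> bool" where
  "standing_assms ipH ip0 J D b minv epsop a CG1 CG2 \<longleftrightarrow>
     hilbert ipH \<and> hilbert ip0 \<and>
     clin J \<and> inj J \<and> (\<forall>v. ipnorm ip0 (J v) \<le> ipnorm ipH v) \<and>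
     (\<forall>f. (\<forall>v. ip0 f (J v) = 0) \<longrightarrow> f = 0) \<and>
     clin D \<and> (\<forall>v. ipnorm ip0 (D v) \<le> ipnorm ipH v) \<and>
     bdd_sesq (ipnorm ipH) b \<and>
     bdd_op (ipnorm ip0) (ipnorm ip0) minv \<and> bdd_op (ipnorm ip0) (ipnorm ip0) epsop \<and>
     (\<forall>u v. a u v = ip0 (minv (D u)) (D v) + b u v - ip0 (epsop (J u)) (J v)) \<and>
     CG1 > 0 \<and> CG2 > 0 \<and>
     (\<forall>v. cmod (a v v + complex_of_real (CG2 * (ipnorm ip0 (J v))\<^sup>2)) \<ge> CG1 * (ipnorm ipH v)\<^sup>2)"

text \<open>Invertibility of the operator A : H \<rightarrow> H^* induced by the form a.\<close>
definition form_invertible :: "('h::cvector \<Rightarrow> 'h \<Rightarrow> complex) \<Rightarrow> ('h \<Rightarrow> 'h \<Rightarrow> complex) \<Rightarrow> bool" where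
  "form_invertible ipH a \<longleftrightarrow> (\<forall>F. dual_elem (ipnorm ipH) F \<longrightarrow> (\<exists>!u. \<forall>v. a u v = F v))"

text \<open>A^{-1} restricted to H0 (f in H0 acts on H via v \<mapsto> (f, v)_{H0}).\<close>
definition Ainv :: "('g::cvector \<Rightarrow> 'g \<Rightarrow> complex) \<Rightarrow> ('h::cvector \<Rightarrow> 'g) \<Rightarrow> ('h \<Rightarrow> 'h \<Rightarrow> complex) \<Rightarrow> 'g \<Rightarrow> 'h" where
  "Ainv ip0 J a f = (THE u. \<forall>v. a u v = ip0 f (J v))"

definition Ainv_norm :: "('h::cvector \<Rightarrow> 'h \<Rightarrow> complex) \<Rightarrow> ('g::cvector \<Rightarrow> 'g \<Rightarrow> complex) \<Rightarrow> ('h \<Rightarrow> 'g) \<Rightarrow> ('h \<Rightarrow> 'h \<Rightarrow> complex) \<Rightarrow> real" where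
  "Ainv_norm ipH ip0 J a = opnorm (ipnorm ip0) (ipnorm ipH) (Ainv ip0 J a)"

definition fd_csubspace :: "'a::cvector set \<Rightarrow> bool" where
  "fd_csubspace S \<longleftrightarrow> (\<exists>B. finite B \<and> S = {(\<Sum>x\<in>B. c x *\<^sub>C x) | c. True})"

definition orth_proj :: "('a::cvector \<Rightarrow> 'a \<Rightarrow> complex) \<Rightarrow> 'a set \<Rightarrow> 'a \<Rightarrow> 'a" where
  "orth_proj ip S u = (THE w. w \<in> S \<and> (\<forall>s\<in>S. ip (u - w) s = 0))"

end

theory Submission
  imports Defs
begin

lemma scaleC_zero_left[simp]: "(0::complex) *\<^sub>C (x::'a::cvector) = 0"
proof -
  have "0 *\<^sub>C x + 0 *\<^sub>C x = (0 + 0) *\<^sub>C x" by (rule scaleC_add_left[symmetric])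
  then show ?thesis by simp
qed

lemma scaleC_zero_right[simp]: "c *\<^sub>C (0::'a::cvector) = 0"
proof -
  have "c *\<^sub>C 0 + c *\<^sub>C 0 = c *\<^sub>C (0 + (0::'a))" by (rule scaleC_add_right[symmetric])
  then show ?thesis by simp
qed

lemma scaleC_minus_right: "c *\<^sub>C (- (x::'a::cvector)) = - (c *\<^sub>C x)"
proof -
  have "c *\<^sub>C (- x) + c *\<^sub>C x = 0" by (metis scaleC_add_right scaleC_zero_right left_minus)
  then show ?thesis by (simp add: eq_neg_iff_add_eq_0)
qed

lemma scaleC_diff_right: "c *\<^sub>C ((x::'a::cvector) - y) = c *\<^sub>C x - c *\<^sub>C y"
  by (metis diff_conv_add_uminus scaleC_add_right scaleC_minus_right)

lemma scaleC_minus_left: "(- c) *\<^sub>C (x::'a::cvector) = - (c *\<^sub>C x)"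
proof -
  have "(- c) *\<^sub>C x + c *\<^sub>C x = 0" by (metis scaleC_add_left scaleC_zero_left left_minus)
  then show ?thesis by (simp add: eq_neg_iff_add_eq_0)
qed

lemma scaleC_diff_left: "(c - d) *\<^sub>C (x::'a::cvector) = c *\<^sub>C x - d *\<^sub>C x"
  by (metis diff_conv_add_uminus scaleC_add_left scaleC_minus_left)

interpretation cv: vector_space "scaleC :: complex \<Rightarrow> 'a \<Rightarrow> 'a::cvector"
  by unfold_locales (auto simp: scaleC_add_right scaleC_add_left scaleC_scaleC scaleC_one)

lemma sesqD:
  assumes "sesq s"
  shows "s (u + v) w = s u w + s v w" "s (c *\<^sub>C u) w = c * s u w"
    "s u (v + w) = s u v + s u w" "s u (c *\<^sub>C w) = cnj c * s u w"
  using assms unfolding sesq_def by auto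

lemma sesq_zero:
  assumes "sesq s" shows "s 0 w = 0" "s w 0 = 0"
  using sesqD(2)[OF assms, of 0 0 w] sesqD(4)[OF assms, of w 0 0] by simp_all

lemma sesq_minus:
  assumes "sesq s" shows "s (- u) w = - s u w" "s w (- u) = - s w u"
  using sesqD(1)[OF assms, of "-u" u w] sesqD(3)[OF assms, of w "-u" u] sesq_zero[OF assms]
  by (simp_all add: eq_neg_iff_add_eq_0)

lemma sesq_more:
  assumes "sesq s"
  shows "s 0 w = 0" "s w 0 = 0" "s (- u) w = - s u w" "s w (- u) = - s w u"
    "s (u - v) w = s u w - s v w" "s w (u - v) = s w u - s w v"
  using sesq_zero[OF assms] sesq_minus[OF assms] sesqD(1)[OF assms, of u "-v" w] sesqD(3)[OF assms, of w u "-v"]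
  by simp_all

lemma sesq_sum_left:
  assumes "sesq s" shows "s (\<Sum>x\<in>A. f x) w = (\<Sum>x\<in>A. s (f x) w)"
  by (induction A rule: infinite_finite_induct) (auto simp: sesq_more[OF assms] sesqD[OF assms])

lemma sesq_sum_right:
  assumes "sesq s" shows "s w (\<Sum>x\<in>A. f x) = (\<Sum>x\<in>A. s w (f x))"
  by (induction A rule: infinite_finite_induct) (auto simp: sesq_more[OF assms] sesqD[OF assms])

context
  fixes ip :: "'a::cvector \<Rightarrow> 'a \<Rightarrow> complex"
  assumes ipa: "inner_prod ip"
begin

lemma ip_sesq: "sesq ip" using ipa unfolding inner_prod_def by blast
lemma ip_sym: "ip y x = cnj (ip x y)" using ipa unfolding inner_prod_def by blast
lemma ip_pos: "x \<noteq> 0 \<Longrightarrow> 0 < Re (ip x x)" using ipa unfolding inner_prod_def by blast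
lemma ip_self_real: "Im (ip x x) = 0"
proof -
  have "Im (ip x x) = Im (cnj (ip x x))" using ip_sym[of x x] by simp
  then show ?thesis by simp
qed
lemma ip_nonneg: "0 \<le> Re (ip x x)"
proof (cases "x = 0")
  case True then show ?thesis by (simp add: sesq_more[OF ip_sesq])
next
  case False then show ?thesis using ip_pos[of x] by simp
qed
lemma ip_self_eq: "ip x x = complex_of_real ((ipnorm ip x)\<^sup>2)"
  unfolding ipnorm_def using ip_self_real ip_nonneg by (simp add: complex_eq_iff)
lemma ipn_nonneg: "0 \<le> ipnorm ip x" unfolding ipnorm_def using ip_nonneg[of x] by simp
lemma ipn_sq: "(ipnorm ip x)\<^sup>2 = Re (ip x x)" unfolding ipnorm_def using ip_nonneg by simp
lemma ipn_zero_iff: "ipnorm ip x = 0 \<longleftrightarrow> x = 0"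
  unfolding ipnorm_def using ip_pos[of x] ip_nonneg[of x] by (cases "x = 0") (auto simp: sesq_more[OF ip_sesq])
lemma ipn_zero[simp]: "ipnorm ip 0 = 0" using ipn_zero_iff by simp


lemma ip_diff_expand:
  "ip (x - t *\<^sub>C y) (x - t *\<^sub>C y) = ip x x - cnj t * ip x y - t * ip y x + t * cnj t * ip y y"
  using ip_sesq by (simp add: sesq_more sesqD algebra_simps)

lemma cauchy_schwarz: "cmod (ip x y) \<le> ipnorm ip x * ipnorm ip y"
proof (cases "y = 0")
  case True then show ?thesis by (simp add: sesq_more[OF ip_sesq])
next
  case False
  define r where "r = (ipnorm ip y)\<^sup>2"
  have r: "r > 0" unfolding r_def using False ipn_zero_iff ipn_nonneg by (metis order_le_less zero_less_power)
  define z where "z = ip x y"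
  define t where "t = z / complex_of_real r"
  have "ip (x - t *\<^sub>C y) (x - t *\<^sub>C y) = ip x x - cnj t * z - t * cnj z + t * cnj t * complex_of_real r"
    unfolding ip_diff_expand z_def r_def using ip_sym[of x y] ip_self_eq[of y] by simp
  also have "\<dots> = ip x x - z * cnj z / complex_of_real r"
    unfolding t_def using r by (simp add: field_simps)
  also have "\<dots> = complex_of_real ((ipnorm ip x)\<^sup>2 - (cmod z)\<^sup>2 / r)"
    using ip_self_eq[of x] complex_norm_square[of z] by simp
  finally have "0 \<le> (ipnorm ip x)\<^sup>2 - (cmod z)\<^sup>2 / r" using ip_nonneg[of "x - t *\<^sub>C y"] by simp
  then have "(cmod z)\<^sup>2 \<le> (ipnorm ip x)\<^sup>2 * r" using r by (simp add: field_simps)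
  also have "\<dots> = (ipnorm ip x * ipnorm ip y)\<^sup>2" unfolding r_def by (simp add: power_mult_distrib)
  finally show ?thesis unfolding z_def
    using ipn_nonneg[of x] ipn_nonneg[of y] by (meson mult_nonneg_nonneg power2_le_imp_le)
qed

lemma ipn_triangle: "ipnorm ip (x + y) \<le> ipnorm ip x + ipnorm ip y"
proof -
  have "ip (x + y) (x + y) = ip x x + ip x y + ip y x + ip y y"
    using ip_sesq by (simp add: sesqD algebra_simps)
  then have "(ipnorm ip (x + y))\<^sup>2 = (ipnorm ip x)\<^sup>2 + 2 * Re (ip x y) + (ipnorm ip y)\<^sup>2"
    using ip_sym[of x y] by (simp add: ipn_sq)
  also have "\<dots> \<le> (ipnorm ip x)\<^sup>2 + 2 * (ipnorm ip x * ipnorm ip y) + (ipnorm ip y)\<^sup>2"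
    using cauchy_schwarz[of x y] complex_Re_le_cmod[of "ip x y"] by simp
  also have "\<dots> = (ipnorm ip x + ipnorm ip y)\<^sup>2" by (simp add: power2_eq_square algebra_simps)
  finally show ?thesis using ipn_nonneg[of x] ipn_nonneg[of y] by (meson add_nonneg_nonneg power2_le_imp_le)
qed

lemma ipn_scale: "ipnorm ip (c *\<^sub>C x) = cmod c * ipnorm ip x"
proof -
  have "ip (c *\<^sub>C x) (c *\<^sub>C x) = (c * cnj c) * ip x x" using ip_sesq by (simp add: sesqD)
  then have "(ipnorm ip (c *\<^sub>C x))\<^sup>2 = (cmod c)\<^sup>2 * (ipnorm ip x)\<^sup>2"
    using ip_self_eq[of x] ip_self_eq[of "c *\<^sub>C x"] complex_norm_square[of c]
    by (metis of_real_eq_iff of_real_mult)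
  then show ?thesis using ipn_nonneg[of x] ipn_nonneg[of "c *\<^sub>C x"]
    by (metis abs_of_nonneg norm_ge_zero power_mult_distrib real_sqrt_abs zero_le_mult_iff)
qed

lemma ipn_minus: "ipnorm ip (- x) = ipnorm ip x"
  using ipn_scale[of "-1" x] by (simp add: scaleC_minus_left scaleC_one)

lemma ipn_commute: "ipnorm ip (x - y) = ipnorm ip (y - x)"
  using ipn_minus[of "x - y"] by simp

lemma ipn_triangle_diff: "ipnorm ip (x - z) \<le> ipnorm ip (x - y) + ipnorm ip (y - z)"
  using ipn_triangle[of "x - y" "y - z"] by simp

lemma ipn_diff_ge: "ipnorm ip x - ipnorm ip y \<le> ipnorm ip (x - y)"
  using ipn_triangle[of "x - y" y] by simp

end


lemma fd_span: assumes "fd_csubspace S" obtains B where "finite B" "S = cv.span B"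
proof -
  obtain B where B: "finite B" "S = {(\<Sum>x\<in>B. c x *\<^sub>C x) | c. True}"
    using assms unfolding fd_csubspace_def by blast
  have "S = cv.span B" unfolding B(2) cv.span_finite[OF B(1)] by auto
  then show ?thesis using B(1) that by blast
qed

lemma cv_module: "module (scaleC :: complex \<Rightarrow> 'a::cvector \<Rightarrow> 'a)"
  using cv.module_axioms .

lemma lin_zero: fixes L :: "'a::cvector \<Rightarrow> complex" assumes "\<forall>x y. L (x + y) = L x + L y" shows "L 0 = (0::complex)"
proof -
  have "L (0 + 0) = L 0 + L 0" using assms by blast
  then show ?thesis by simp
qed

lemma span_ext:
  fixes L :: "'a::cvector \<Rightarrow> complex"
  assumes ses: "sesq \<phi>" and La: "\<forall>x y. L (x + y) = L x + L y" and Ls: "\<forall>c x. L (c *\<^sub>C x) = c * L x"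
    and "w \<in> cv.span C" "\<forall>x\<in>C. \<phi> x v = L x"
  shows "\<phi> w v = (L w :: complex)"
proof -
  have "cv.subspace {w. \<phi> w v = L w}"
    unfolding cv.subspace_def using sesqD[OF ses] sesq_zero[OF ses] lin_zero[OF La] La Ls by auto
  then have "cv.span C \<subseteq> {w. \<phi> w v = L w}" using assms(5) by (intro cv.span_minimal) auto
  then show ?thesis using assms(4) by auto
qed

lemma riesz_fd:
  fixes \<phi> :: "'a::cvector \<Rightarrow> 'a \<Rightarrow> complex" and L :: "'a \<Rightarrow> complex"
  assumes ses: "sesq \<phi>" and fB: "finite B"
    and nd: "\<forall>v\<in>cv.span B. (\<forall>w\<in>cv.span B. \<phi> w v = 0) \<longrightarrow> v = 0"
    and La: "\<forall>x y. L (x + y) = L x + L y" and Ls: "\<forall>c x. L (c *\<^sub>C x) = c * L x"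
  shows "\<exists>v\<in>cv.span B. \<forall>w\<in>cv.span B. \<phi> w v = L w"
proof -
  define V where "V = cv.span B"
  obtain C where C: "C \<subseteq> V" "cv.independent C" "V \<subseteq> cv.span C" "card C = cv.dim V"
    using cv.basis_exists by blast
  have fC: "finite C" using cv.independent_span_bound[OF fB C(2)] C(1) unfolding V_def by blast
  have spC: "cv.span C = V"
    using C(1,3) cv.span_mono[OF C(1)] unfolding V_def cv.span_span by blast
  define S where "S v = (\<Sum>x\<in>C. cnj (\<phi> x v) *\<^sub>C x)" for v
  have Sadd: "S (u + v) = S u + S v" for u v
    unfolding S_def by (simp add: sesqD[OF ses] scaleC_add_left sum.distrib)
  have Sscale: "S (c *\<^sub>C v) = c *\<^sub>C S v" for c v
    unfolding S_def by (simp add: sesqD[OF ses] cv.scale_sum_right scaleC_scaleC)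
  have mh: "module_hom scaleC scaleC S"
    unfolding module_hom_iff using cv_module Sadd Sscale by blast
  have Sdiff: "S (u - v) = S u - S v" for u v
    using module_hom.diff[OF mh] .
  have SV: "S v \<in> V" for v
    unfolding S_def spC[symmetric] by (intro cv.span_sum cv.span_scale cv.span_base)
  have coef: "\<forall>x\<in>C. c x = d x" if "(\<Sum>x\<in>C. c x *\<^sub>C x) = (\<Sum>x\<in>C. d x *\<^sub>C x)" for c d
  proof -
    have "(\<Sum>x\<in>C. (c x - d x) *\<^sub>C x) = 0"
      using that by (simp add: scaleC_diff_left sum_subtractf)
    moreover have I: "\<forall>S\<subseteq>C. finite S \<longrightarrow> (\<forall>u. (\<Sum>v\<in>S. u v *\<^sub>C v) = 0 \<longrightarrow> (\<forall>v\<in>S. u v = 0))"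
      using C(2) unfolding cv.independent_explicit_finite_subsets .
    ultimately show ?thesis using I[rule_format, OF order_refl fC, of "\<lambda>x. c x - d x"] by auto
  qed
  have S0: "v = 0" if "v \<in> V" "S v = 0" for v
  proof -
    have "(\<Sum>x\<in>C. cnj (\<phi> x v) *\<^sub>C x) = (\<Sum>x\<in>C. 0 *\<^sub>C x)" using that(2) unfolding S_def by simp
    then have "\<forall>x\<in>C. \<phi> x v = 0" using coef by fastforce
    then have "\<forall>w\<in>V. \<phi> w v = 0" using span_ext[OF ses, of "\<lambda>_. 0"] spC by auto
    then show ?thesis using nd that(1) unfolding V_def by blast
  qed
  have injV: "inj_on S V"
  proof (rule inj_onI)
    fix x y assume "x \<in> V" "y \<in> V" "S x = S y"
    then have "x - y \<in> V" "S (x - y) = 0" unfolding V_def by (auto simp: Sdiff cv.span_diff)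
    then show "x = y" using S0[of "x - y"] by simp
  qed
  have indep: "cv.independent (S ` C)"
    using module_hom.independent_injective_image[OF mh C(2)] injV spC by simp
  have cardSC: "card (S ` C) = card C"
    using card_image inj_on_subset[OF injV C(1)] by blast
  have Vsub: "V \<subseteq> cv.span (S ` C)"
  proof
    fix x assume xV: "x \<in> V"
    show "x \<in> cv.span (S ` C)"
    proof (rule ccontr)
      assume nx: "x \<notin> cv.span (S ` C)"
      have "cv.independent (insert x (S ` C))" using cv.independent_insertI[OF nx indep] .
      moreover have "insert x (S ` C) \<subseteq> cv.span C" using xV SV spC by auto
      ultimately have "card (insert x (S ` C)) \<le> card C"
        using cv.independent_span_bound[OF fC] by blast
      moreover have "x \<notin> S ` C" using nx cv.span_base[of x "S ` C"] by metis
      ultimately show False using cardSC fC by simp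
    qed
  qed
  define t where "t = (\<Sum>x\<in>C. cnj (L x) *\<^sub>C x)"
  have "t \<in> V" unfolding t_def spC[symmetric] by (intro cv.span_sum cv.span_scale cv.span_base)
  then have "t \<in> S ` cv.span C" using Vsub module_hom.span_image[OF mh, of C] by auto
  then obtain v where v: "v \<in> V" "S v = t" using spC by auto
  then have "\<forall>x\<in>C. cnj (\<phi> x v) = cnj (L x)" using coef[of "\<lambda>x. cnj (\<phi> x v)" "\<lambda>x. cnj (L x)"]
    unfolding S_def t_def by blast
  then have "\<forall>x\<in>C. \<phi> x v = L x" by simp
  then have "\<forall>w\<in>V. \<phi> w v = L w" using span_ext[OF ses La Ls] spC by blast
  then show ?thesis using v(1) unfolding V_def by blast
qed


lemma clinD: assumes "clin T" shows "T (x + y) = T x + T y" "T (c *\<^sub>C x) = c *\<^sub>C T x"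
  using assms unfolding clin_def by auto

lemma clin_more: assumes "clin T" shows "T 0 = 0" "T (- x) = - T x" "T (x - y) = T x - T y"
proof -
  show z: "T 0 = 0" using clinD(2)[OF assms, of 0 0] by simp
  show m: "T (- x) = - T x" for x using clinD(1)[OF assms, of x "-x"] z by (simp add: eq_neg_iff_add_eq_0 add.commute)
  show "T (x - y) = T x - T y" using clinD(1)[OF assms, of x "-y"] m[of y] by simp
qed

lemma hilbert_ip: "hilbert ip \<Longrightarrow> inner_prod ip" unfolding hilbert_def by blast

lemma hilbert_complete:
  assumes "hilbert ip" "\<forall>e>0. \<exists>N. \<forall>m\<ge>N. \<forall>n\<ge>N. ipnorm ip (X m - X n) < e"
  shows "\<exists>L. (\<lambda>n. ipnorm ip (X n - L)) \<longlonglongrightarrow> 0"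
  using assms unfolding hilbert_def by blast

lemma closed_graph:
  fixes ipX :: "'x::cvector \<Rightarrow> 'x \<Rightarrow> complex" and ipY :: "'y::cvector \<Rightarrow> 'y \<Rightarrow> complex"
    and T :: "'x \<Rightarrow> 'y"
  assumes hX: "hilbert ipX" and hY: "hilbert ipY" and lT: "clin T"
    and closed: "\<And>g u X. (\<lambda>n. ipnorm ipX (X n - g)) \<longlonglongrightarrow> 0 \<Longrightarrow> (\<lambda>n. ipnorm ipY (T (X n) - u)) \<longlonglongrightarrow> 0 \<Longrightarrow> u = T g"
  shows "\<exists>K. \<forall>g. ipnorm ipY (T g) \<le> K * ipnorm ipX g"
proof -
  let ?nX = "ipnorm ipX" and ?nY = "ipnorm ipY"
  have iX: "inner_prod ipX" and iY: "inner_prod ipY" using hX hY hilbert_ip by auto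
  interpret MX: Metric_space "UNIV::'x set" "\<lambda>x y. ?nX (x - y)"
  proof
    show "0 \<le> ?nX (x - y)" for x y by (rule ipn_nonneg[OF iX])
    show "?nX (x - y) = ?nX (y - x)" for x y by (rule ipn_commute[OF iX])
    show "?nX (x - y) = 0 \<longleftrightarrow> x = y" for x y using ipn_zero_iff[OF iX, of "x - y"] by simp
    show "?nX (x - z) \<le> ?nX (x - y) + ?nX (y - z)" for x y z by (rule ipn_triangle_diff[OF iX])
  qed
  have mc: MX.mcomplete
    unfolding MX.mcomplete_def
  proof (intro allI impI)
    fix \<sigma> assume "MX.MCauchy \<sigma>"
    then have c: "\<forall>\<epsilon>>0. \<exists>N. \<forall>n n'. N \<le> n \<longrightarrow> N \<le> n' \<longrightarrow> ?nX (\<sigma> n - \<sigma> n') < \<epsilon>"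
      unfolding MX.MCauchy_def by (elim conjE)
    have "\<forall>e>0. \<exists>N. \<forall>m\<ge>N. \<forall>n\<ge>N. ?nX (\<sigma> m - \<sigma> n) < e"
    proof (intro allI impI)
      fix e :: real assume "e > 0"
      then obtain N where "\<forall>n n'. N \<le> n \<longrightarrow> N \<le> n' \<longrightarrow> ?nX (\<sigma> n - \<sigma> n') < e" using c by blast
      then show "\<exists>N. \<forall>m\<ge>N. \<forall>n\<ge>N. ?nX (\<sigma> m - \<sigma> n) < e" by blast
    qed
    then obtain L where L: "(\<lambda>n. ?nX (\<sigma> n - L)) \<longlonglongrightarrow> 0" using hilbert_complete[OF hX] by blast
    have "\<forall>\<epsilon>>0. eventually (\<lambda>n. ?nX (\<sigma> n - L) < \<epsilon>) sequentially"
      using order_tendstoD(2)[OF L] by blast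
    then show "\<exists>x. limitin MX.mtopology \<sigma> x sequentially"
      by (intro exI[of _ L]) (simp add: MX.limitin_metric)
  qed
  define E where "E j = {x. ?nY (T x) \<le> real j}" for j :: nat
  have "\<exists>j. MX.mtopology interior_of (MX.mtopology closure_of E j) \<noteq> {}"
  proof (rule ccontr)
    assume "\<not> ?thesis"
    then have all: "\<forall>j. MX.mtopology interior_of (MX.mtopology closure_of E j) = {}" by blast
    have "MX.mtopology interior_of \<Union>(range (\<lambda>j. MX.mtopology closure_of E j)) = {}"
      by (rule MX.metric_Baire_category_alt[OF mc]) (auto simp: all)
    moreover have "\<Union>(range (\<lambda>j. MX.mtopology closure_of E j)) = UNIV"
    proof -
      have "x \<in> E (nat \<lceil>?nY (T x)\<rceil>)" for x unfolding E_def by (simp add: real_nat_ceiling_ge)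
      moreover have "E j \<subseteq> MX.mtopology closure_of E j" for j by (rule closure_of_subset) simp
      ultimately show ?thesis by blast
    qed
    ultimately show False using interior_of_topspace[of MX.mtopology] by simp
  qed
  then obtain j x0 where x0: "x0 \<in> MX.mtopology interior_of (MX.mtopology closure_of E j)" by blast
  then obtain r where r: "r > 0" "MX.mball x0 r \<subseteq> MX.mtopology interior_of (MX.mtopology closure_of E j)"
    using openin_interior_of MX.openin_mtopology by metis
  have near: "\<exists>z. ?nY (T z) \<le> real j \<and> ?nX (y - z) < \<epsilon>" if "?nX (x0 - y) < r" "\<epsilon> > 0" for y \<epsilon>
  proof -
    have "y \<in> MX.mtopology closure_of E j" using that r interior_of_subset by fastforce
    then show ?thesis using that(2) unfolding MX.metric_closure_of E_def by auto
  qed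
  have near2: "\<exists>z. ?nY (T z) \<le> 2 * real j \<and> ?nX (g - z) < \<epsilon>" if gr: "?nX g < r" and ep: "\<epsilon> > 0" for g \<epsilon>
  proof -
    have "?nX (x0 - (x0 + g)) < r" using gr ipn_minus[OF iX, of g] by simp
    then obtain z1 where z1: "?nY (T z1) \<le> real j" "?nX ((x0 + g) - z1) < \<epsilon>/2"
      using near[of "x0 + g" "\<epsilon>/2"] ep by auto
    obtain z2 where z2: "?nY (T z2) \<le> real j" "?nX (x0 - z2) < \<epsilon>/2"
      using near[of x0 "\<epsilon>/2"] ep r(1) ipn_zero[OF iX] by auto
    have "?nY (T (z1 - z2)) \<le> ?nY (T z1) + ?nY (T z2)"
      unfolding clin_more(3)[OF lT] using ipn_triangle[OF iY, of "T z1" "- T z2"] ipn_minus[OF iY, of "T z2"] by simp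
    moreover have eq: "g - (z1 - z2) = ((x0 + g) - z1) + - (x0 - z2)" by (simp add: algebra_simps)
    have "?nX (g - (z1 - z2)) \<le> ?nX ((x0 + g) - z1) + ?nX (- (x0 - z2))"
      unfolding eq by (rule ipn_triangle[OF iX])
    then have "?nX (g - (z1 - z2)) \<le> ?nX ((x0 + g) - z1) + ?nX (x0 - z2)"
      unfolding ipn_minus[OF iX] .
    ultimately show ?thesis using z1 z2 by (intro exI[of _ "z1 - z2"]) auto
  qed
  define K where "K = 4 * real j / r"
  have K0: "K \<ge> 0" unfolding K_def using r(1) by simp
  have step: "\<exists>y. ?nX (g - y) \<le> ?nX g / 2 \<and> ?nY (T y) \<le> K * ?nX g" for g
  proof (cases "g = 0")
    case True then show ?thesis by (intro exI[of _ 0]) (simp add: clin_more(1)[OF lT] ipn_zero[OF iX] ipn_zero[OF iY])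
  next
    case False
    then have ng: "?nX g > 0" using ipn_zero_iff[OF iX] ipn_nonneg[OF iX] by (metis order_le_less)
    define s where "s = r / (2 * ?nX g)"
    have s: "s > 0" unfolding s_def using ng r(1) by simp
    have "?nX (complex_of_real s *\<^sub>C g) = s * ?nX g" using s by (simp add: ipn_scale[OF iX])
    also have "\<dots> = r / 2" unfolding s_def using ng by simp
    finally have "?nX (complex_of_real s *\<^sub>C g) = r / 2" .
    then obtain z where z: "?nY (T z) \<le> 2 * real j" "?nX (complex_of_real s *\<^sub>C g - z) < s * ?nX g / 2"
      using near2[of "complex_of_real s *\<^sub>C g" "s * ?nX g / 2"] r(1) s ng by auto
    define y where "y = complex_of_real (1 / s) *\<^sub>C z"
    have "g - y = complex_of_real (1/s) *\<^sub>C (complex_of_real s *\<^sub>C g - z)"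
      unfolding y_def scaleC_diff_right scaleC_scaleC using s by (simp add: scaleC_one)
    then have "?nX (g - y) = (1/s) * ?nX (complex_of_real s *\<^sub>C g - z)"
      using s by (simp add: ipn_scale[OF iX] norm_divide)
    also have "\<dots> \<le> ?nX g / 2" using z(2) s by (simp add: field_simps)
    finally have 1: "?nX (g - y) \<le> ?nX g / 2" .
    have "?nY (T y) = (1/s) * ?nY (T z)" unfolding y_def clinD(2)[OF lT] using s by (simp add: ipn_scale[OF iY] norm_divide)
    also have "\<dots> \<le> (1/s) * (2 * real j)" using z(1) s by (simp add: divide_right_mono)
    also have "\<dots> = K * ?nX g" unfolding K_def s_def using r(1) ng by (simp add: field_simps)
    finally show ?thesis using 1 by blast
  qed
  obtain Y where Y: "\<And>g. ?nX (g - Y g) \<le> ?nX g / 2 \<and> ?nY (T (Y g)) \<le> K * ?nX g"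
    using step by metis
  show ?thesis
  proof (intro exI[of _ "2 * K"] allI)
    fix g
    define R where "R = rec_nat g (\<lambda>_ h. h - Y h)"
    have R0: "R 0 = g" and RS: "R (Suc m) = R m - Y (R m)" for m unfolding R_def by simp_all
    have Rb: "?nX (R m) \<le> ?nX g / 2 ^ m" for m
    proof (induction m)
      case 0 then show ?case by (simp add: R0)
    next
      case (Suc m)
      have "?nX (R (Suc m)) \<le> ?nX (R m) / 2" unfolding RS using Y[of "R m"] by simp
      also have "\<dots> \<le> ?nX g / 2 ^ Suc m" using Suc by (simp add: field_simps)
      finally show ?case .
    qed
    define P where "P m = T (g - R m)" for m
    have P0: "P 0 = 0" unfolding P_def R0 using clin_more(1)[OF lT] by simp
    have Pstep: "P (Suc m) - P m = T (Y (R m))" for m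
    proof -
      have "P (Suc m) - P m = T ((g - R (Suc m)) - (g - R m))" unfolding P_def by (simp add: clin_more(3)[OF lT])
      also have "(g - R (Suc m)) - (g - R m) = Y (R m)" unfolding RS by simp
      finally show ?thesis .
    qed
    have TYb: "?nY (T (Y (R m))) \<le> K * ?nX g / 2 ^ m" for m
    proof -
      have "?nY (T (Y (R m))) \<le> K * ?nX (R m)" using Y[of "R m"] by simp
      also have "\<dots> \<le> K * (?nX g / 2 ^ m)" using Rb[of m] K0 by (rule mult_left_mono)
      finally show ?thesis by simp
    qed
    define c where "c = 2 * K * ?nX g"
    have c0: "c \<ge> 0" unfolding c_def using K0 ipn_nonneg[OF iX, of g] by simp
    have Pd: "?nY (P (m + k) - P m) \<le> c * (1 / 2 ^ m - 1 / 2 ^ (m + k))" for m k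
    proof (induction k)
      case 0 then show ?case by (simp add: ipn_zero[OF iY])
    next
      case (Suc k)
      have "P (m + Suc k) - P m = (P (Suc (m + k)) - P (m + k)) + (P (m + k) - P m)" by simp
      then have "?nY (P (m + Suc k) - P m) \<le> ?nY (P (Suc (m + k)) - P (m + k)) + ?nY (P (m + k) - P m)"
        using ipn_triangle[OF iY] by metis
      also have "\<dots> \<le> K * ?nX g / 2 ^ (m + k) + c * (1 / 2 ^ m - 1 / 2 ^ (m + k))"
        using Pstep[of "m + k"] TYb[of "m + k"] Suc by simp
      also have "\<dots> = c * (1 / 2 ^ m - 1 / 2 ^ (m + Suc k))" unfolding c_def by (simp add: field_simps)
      finally show ?case .
    qed
    have Pd2: "?nY (P n - P m) \<le> c / 2 ^ m" if mn: "m \<le> n" for m n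
    proof -
      obtain k where n: "n = m + k" using le_Suc_ex[OF mn] by blast
      have "?nY (P n - P m) \<le> c * (1 / 2 ^ m - 1 / 2 ^ (m + k))" unfolding n by (rule Pd)
      also have "\<dots> \<le> c * (1 / 2 ^ m)" using c0 by (intro mult_left_mono) auto
      finally show ?thesis by simp
    qed
    have cauchy: "\<forall>e>0. \<exists>N. \<forall>m\<ge>N. \<forall>n\<ge>N. ?nY (P m - P n) < e"
    proof (intro allI impI)
      fix e :: real assume e: "e > 0"
      obtain N where N: "(1/2::real) ^ N < e / (c + 1)" using real_arch_pow_inv[of "e / (c + 1)" "1/2"] e c0 by auto
      have cN: "c / 2 ^ N < e"
      proof -
        have "c / 2 ^ N \<le> (c + 1) * (1/2) ^ N" by (simp add: field_simps)
        also have "\<dots> < (c + 1) * (e / (c + 1))" using N c0 by (intro mult_strict_left_mono) auto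
        also have "\<dots> = e" using c0 by simp
        finally show ?thesis .
      qed
      have "?nY (P m - P n) < e" if "m \<ge> N" "n \<ge> N" for m n
      proof -
        have mono: "c / 2 ^ k \<le> c / 2 ^ N" if "k \<ge> N" for k
          using c0 that by (intro divide_left_mono) (auto intro: power_increasing)
        show ?thesis
        proof (cases "n \<le> m")
          case True then show ?thesis using Pd2[of n m] mono[of n] cN \<open>n \<ge> N\<close> by linarith
        next
          case False then show ?thesis using Pd2[of m n] mono[of m] cN \<open>m \<ge> N\<close> ipn_commute[OF iY, of "P m" "P n"] by linarith
        qed
      qed
      then show "\<exists>N. \<forall>m\<ge>N. \<forall>n\<ge>N. ?nY (P m - P n) < e" by blast
    qed
    obtain u where u: "(\<lambda>n. ?nY (P n - u)) \<longlonglongrightarrow> 0" using hilbert_complete[OF hY cauchy] by blast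
    have Rlim: "(\<lambda>n. ?nX ((g - R n) - g)) \<longlonglongrightarrow> 0"
    proof (rule tendsto_sandwich[of "\<lambda>_. 0" _ _ "\<lambda>n. ?nX g * (1/2) ^ n"])
      show "\<forall>\<^sub>F n in sequentially. 0 \<le> ?nX ((g - R n) - g)" by (simp add: ipn_nonneg[OF iX])
      have "?nX ((g - R n) - g) \<le> ?nX g * (1/2) ^ n" for n
      proof -
        have "?nX ((g - R n) - g) = ?nX (R n)" using ipn_minus[OF iX, of "R n"] by simp
        also have "\<dots> \<le> ?nX g / 2 ^ n" by (rule Rb)
        also have "\<dots> = ?nX g * (1/2) ^ n" by (simp add: power_divide)
        finally show ?thesis .
      qed
      then show "\<forall>\<^sub>F n in sequentially. ?nX ((g - R n) - g) \<le> ?nX g * (1/2) ^ n" by simp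
      show "(\<lambda>n. ?nX g * (1/2::real) ^ n) \<longlonglongrightarrow> 0"
        by (intro tendsto_mult_right_zero LIMSEQ_power_zero) simp
    qed simp
    have uT: "u = T g" using closed[OF Rlim] u unfolding P_def by blast
    have Pb: "?nY (P n) \<le> c" for n
    proof -
      have "?nY (P (0 + n) - P 0) \<le> c * (1 / 2 ^ 0 - 1 / 2 ^ (0 + n))" by (rule Pd)
      also have "\<dots> \<le> c" using c0 by (simp add: mult_left_le)
      finally show ?thesis unfolding P0 by simp
    qed
    have "(\<lambda>n. c + ?nY (P n - u)) \<longlonglongrightarrow> c + 0" by (intro tendsto_add tendsto_const u)
    moreover have "?nY (T g) \<le> c + ?nY (P n - u)" for n
    proof -
      have "T g = P n + - (P n - u)" unfolding uT by simp
      then have "?nY (T g) \<le> ?nY (P n) + ?nY (- (P n - u))" using ipn_triangle[OF iY] by metis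
      then show ?thesis using Pb[of n] ipn_commute[OF iY, of u "P n"] by simp
    qed
    ultimately have "?nY (T g) \<le> c" using LIMSEQ_le_const[of _ "c + 0" "?nY (T g)"] by simp
    then show "?nY (T g) \<le> 2 * K * ?nX g" unfolding c_def .
  qed
qed


lemma opnorm_bound:
  fixes nX :: "'x::cvector \<Rightarrow> real" and nY :: "'y::cvector \<Rightarrow> real"
  assumes nn: "\<And>x. nX x \<ge> 0" "\<And>y. nY y \<ge> 0" and K: "\<And>x. nY (T x) \<le> K * nX x"
  shows "nY (T x) \<le> opnorm nX nY T * nX x"
proof (cases "nX x = 0")
  case True then show ?thesis using K[of x] by simp
next
  case False
  then have pos: "nX x > 0" using nn(1)[of x] by simp
  have bdd: "bdd_above (range (\<lambda>x. nY (T x) / nX x))"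
  proof (rule bdd_aboveI2)
    fix z
    show "nY (T z) / nX z \<le> max K 0"
    proof (cases "nX z = 0")
      case True then show ?thesis by simp
    next
      case False then have "nX z > 0" using nn(1)[of z] by simp
      then have "nY (T z) / nX z \<le> K" using K[of z] by (simp add: divide_le_eq mult.commute)
      then show ?thesis by (simp add: le_max_iff_disj)
    qed
  qed
  have "nY (T x) / nX x \<le> opnorm nX nY T" unfolding opnorm_def by (rule cSUP_upper[OF _ bdd]) simp
  then show ?thesis using pos by (simp add: divide_le_eq)
qed

context
  fixes ipH :: "'h::cvector \<Rightarrow> 'h \<Rightarrow> complex" and ip0 :: "'g::cvector \<Rightarrow> 'g \<Rightarrow> complex"
    and J D :: "'h \<Rightarrow> 'g" and b a :: "'h \<Rightarrow> 'h \<Rightarrow> complex" and minv epsop :: "'g \<Rightarrow> 'g"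
    and CG1 CG2 :: real
  assumes std: "standing_assms ipH ip0 J D b minv epsop a CG1 CG2"
    and inv: "form_invertible ipH a"
begin

abbreviation "nH \<equiv> ipnorm ipH"
abbreviation "n0 \<equiv> ipnorm ip0"

lemma hH: "hilbert ipH" and h0: "hilbert ip0" using std unfolding standing_assms_def by blast+
lemma iH: "inner_prod ipH" and i0: "inner_prod ip0" using hH h0 hilbert_ip by blast+
lemma clJ: "clin J" and clD: "clin D" using std unfolding standing_assms_def by blast+
lemma Jn: "n0 (J v) \<le> nH v" and Dn: "n0 (D v) \<le> nH v" using std unfolding standing_assms_def by blast+
lemma bb: "bdd_sesq nH b" using std unfolding standing_assms_def by blast
lemma bm: "bdd_op n0 n0 minv" and be: "bdd_op n0 n0 epsop" using std unfolding standing_assms_def by blast+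
lemma a_def: "a u v = ip0 (minv (D u)) (D v) + b u v - ip0 (epsop (J u)) (J v)"
  using std unfolding standing_assms_def by blast
lemma CG: "CG1 > 0" "CG2 > 0" using std unfolding standing_assms_def by blast+
lemma garding: "cmod (a v v + complex_of_real (CG2 * (n0 (J v))\<^sup>2)) \<ge> CG1 * (nH v)\<^sup>2"
  using std unfolding standing_assms_def by blast
lemma Jdense: "(\<forall>v. ip0 f (J v) = 0) \<Longrightarrow> f = 0"
  using std unfolding standing_assms_def by blast

lemma a_sesq: "sesq a"
proof -
  have s0: "sesq ip0" using ip_sesq[OF i0] .
  have sb: "sesq b" using bb unfolding bdd_sesq_def by blast
  have cm: "clin minv" and ce: "clin epsop" using bm be unfolding bdd_op_def by blast+
  show ?thesis unfolding sesq_def a_def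
    by (simp add: clinD[OF cm] clinD[OF ce] clinD[OF clJ] clinD[OF clD] sesqD[OF s0] sesqD[OF sb] algebra_simps)
qed

lemma bdd_op_nonneg: assumes "bdd_op n0 n0 T" obtains C where "C \<ge> 0" "\<And>x. n0 (T x) \<le> C * n0 x"
proof -
  obtain C where C: "\<And>x. n0 (T x) \<le> C * n0 x" using assms unfolding bdd_op_def by blast
  have "n0 (T x) \<le> max C 0 * n0 x" for x
    using C[of x] ipn_nonneg[OF i0, of x] by (smt (verit) mult_right_mono max.cobounded1)
  then show ?thesis using that[of "max C 0"] by simp
qed

lemma a_bdd: obtains M where "M \<ge> 0" "\<And>u v. cmod (a u v) \<le> M * nH u * nH v"
proof -
  obtain Cm where Cm: "Cm \<ge> 0" "\<And>x. n0 (minv x) \<le> Cm * n0 x" using bdd_op_nonneg[OF bm] by blast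
  obtain Ce where Ce: "Ce \<ge> 0" "\<And>x. n0 (epsop x) \<le> Ce * n0 x" using bdd_op_nonneg[OF be] by blast
  obtain Cb where Cb: "\<And>u v. cmod (b u v) \<le> Cb * nH u * nH v" using bb unfolding bdd_sesq_def by blast
  define M where "M = Cm + Ce + max Cb 0"
  have "cmod (a u v) \<le> M * nH u * nH v" for u v
  proof -
    have nnu: "nH u \<ge> 0" "nH v \<ge> 0" using ipn_nonneg[OF iH] by auto
    have 1: "cmod (ip0 (minv (D u)) (D v)) \<le> Cm * nH u * nH v"
    proof -
      have "cmod (ip0 (minv (D u)) (D v)) \<le> n0 (minv (D u)) * n0 (D v)" by (rule cauchy_schwarz[OF i0])
      also have "\<dots> \<le> (Cm * n0 (D u)) * n0 (D v)" using Cm(2) ipn_nonneg[OF i0] by (intro mult_right_mono) auto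
      also have "\<dots> \<le> (Cm * nH u) * nH v" using Cm(1) Dn ipn_nonneg[OF i0] nnu
        by (intro mult_mono mult_left_mono) auto
      finally show ?thesis .
    qed
    have 2: "cmod (ip0 (epsop (J u)) (J v)) \<le> Ce * nH u * nH v"
    proof -
      have "cmod (ip0 (epsop (J u)) (J v)) \<le> n0 (epsop (J u)) * n0 (J v)" by (rule cauchy_schwarz[OF i0])
      also have "\<dots> \<le> (Ce * n0 (J u)) * n0 (J v)" using Ce(2) ipn_nonneg[OF i0] by (intro mult_right_mono) auto
      also have "\<dots> \<le> (Ce * nH u) * nH v" using Ce(1) Jn ipn_nonneg[OF i0] nnu
        by (intro mult_mono mult_left_mono) auto
      finally show ?thesis .
    qed
    have 3: "cmod (b u v) \<le> max Cb 0 * nH u * nH v"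
      using Cb[of u v] nnu by (smt (verit) mult_right_mono max.cobounded1 mult_nonneg_nonneg)
    have "cmod (a u v) \<le> cmod (ip0 (minv (D u)) (D v)) + cmod (b u v) + cmod (ip0 (epsop (J u)) (J v))"
      unfolding a_def using norm_triangle_ineq4[of "ip0 (minv (D u)) (D v) + b u v" "ip0 (epsop (J u)) (J v)"]
        norm_triangle_ineq[of "ip0 (minv (D u)) (D v)" "b u v"] by linarith
    also have "\<dots> \<le> M * nH u * nH v" using 1 2 3 unfolding M_def by (simp add: algebra_simps)
    finally show ?thesis .
  qed
  moreover have "M \<ge> 0" unfolding M_def using Cm Ce by simp
  ultimately show ?thesis using that by blast
qed

lemma dual_ip0: "dual_elem nH (\<lambda>v. ip0 f (J v))"
  unfolding dual_elem_def antilin_def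
proof (intro conjI allI exI)
  show "ip0 f (J (x + y)) = ip0 f (J x) + ip0 f (J y)" for x y
    by (simp add: clinD[OF clJ] sesqD[OF ip_sesq[OF i0]])
  show "ip0 f (J (c *\<^sub>C x)) = cnj c * ip0 f (J x)" for c x
    by (simp add: clinD[OF clJ] sesqD[OF ip_sesq[OF i0]])
  show "cmod (ip0 f (J v)) \<le> n0 f * nH v" for v
    using cauchy_schwarz[OF i0, of f "J v"] Jn[of v] ipn_nonneg[OF i0, of f]
    by (meson mult_left_mono order_trans)
qed

lemma Ainv_ex1: "\<exists>!u. \<forall>v. a u v = ip0 f (J v)"
  using inv dual_ip0[of f] unfolding form_invertible_def by blast

lemma Ainv_prop: "a (Ainv ip0 J a f) v = ip0 f (J v)"
  using theI'[OF Ainv_ex1[of f]] unfolding Ainv_def by blast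

lemma Ainv_unique: "(\<And>v. a u v = ip0 f (J v)) \<Longrightarrow> u = Ainv ip0 J a f"
  using Ainv_ex1[of f] Ainv_prop[of f] by blast

lemma Ainv_clin: "clin (Ainv ip0 J a)"
  unfolding clin_def
proof (intro conjI allI)
  fix x y
  show "Ainv ip0 J a (x + y) = Ainv ip0 J a x + Ainv ip0 J a y"
    by (rule Ainv_unique[symmetric]) (simp add: sesqD[OF a_sesq] sesqD[OF ip_sesq[OF i0]] Ainv_prop)
next
  fix c x
  show "Ainv ip0 J a (c *\<^sub>C x) = c *\<^sub>C Ainv ip0 J a x"
    by (rule Ainv_unique[symmetric]) (simp add: sesqD[OF a_sesq] sesqD[OF ip_sesq[OF i0]] Ainv_prop)
qed

lemma Ainv_bdd: "\<exists>K. \<forall>f. nH (Ainv ip0 J a f) \<le> K * n0 f"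
proof (rule closed_graph[OF h0 hH Ainv_clin])
  fix g u and X :: "nat \<Rightarrow> 'g"
  assume X: "(\<lambda>n. n0 (X n - g)) \<longlonglongrightarrow> 0" and U: "(\<lambda>n. nH (Ainv ip0 J a (X n) - u)) \<longlonglongrightarrow> 0"
  obtain M where M: "M \<ge> 0" "\<And>u v. cmod (a u v) \<le> M * nH u * nH v" using a_bdd by blast
  show "u = Ainv ip0 J a g"
  proof (rule Ainv_unique)
    fix v
    have b: "cmod (a u v - ip0 g (J v)) \<le> M * nH (Ainv ip0 J a (X n) - u) * nH v + n0 (X n - g) * nH v" for n
    proof -
      have "a u v - ip0 g (J v) = - a (Ainv ip0 J a (X n) - u) v + ip0 (X n - g) (J v)"
        using Ainv_prop[of "X n" v] by (simp add: sesq_more[OF a_sesq] sesq_more[OF ip_sesq[OF i0]])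
      then have "cmod (a u v - ip0 g (J v)) \<le> cmod (a (Ainv ip0 J a (X n) - u) v) + cmod (ip0 (X n - g) (J v))"
        by (metis norm_minus_cancel norm_triangle_ineq)
      also have "\<dots> \<le> M * nH (Ainv ip0 J a (X n) - u) * nH v + n0 (X n - g) * nH v"
      proof (rule add_mono)
        show "cmod (a (Ainv ip0 J a (X n) - u) v) \<le> M * nH (Ainv ip0 J a (X n) - u) * nH v" by (rule M(2))
        show "cmod (ip0 (X n - g) (J v)) \<le> n0 (X n - g) * nH v"
          using cauchy_schwarz[OF i0, of "X n - g" "J v"] Jn[of v] ipn_nonneg[OF i0, of "X n - g"]
          by (meson mult_left_mono order_trans)
      qed
      finally show ?thesis .
    qed
    have "(\<lambda>n. M * nH (Ainv ip0 J a (X n) - u) * nH v + n0 (X n - g) * nH v) \<longlonglongrightarrow> M * 0 * nH v + 0 * nH v"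
      by (intro tendsto_intros X U)
    then have "cmod (a u v - ip0 g (J v)) \<le> 0" using b by (intro LIMSEQ_le_const) auto
    then show "a u v = ip0 g (J v)" by simp
  qed
qed

lemma Ainv_norm_bound: "nH (Ainv ip0 J a f) \<le> Ainv_norm ipH ip0 J a * n0 f"
proof -
  obtain K where "\<forall>f. nH (Ainv ip0 J a f) \<le> K * n0 f" using Ainv_bdd by blast
  then show ?thesis unfolding Ainv_norm_def
    by (intro opnorm_bound[where K=K] ipn_nonneg[OF i0] ipn_nonneg[OF iH]) auto
qed

lemma Ainv_proj_bound:
  assumes "\<And>x. nH (x - P x) \<le> nH x"
  shows "nH (Ainv ip0 J a f - P (Ainv ip0 J a f)) \<le> opnorm n0 nH (\<lambda>f. Ainv ip0 J a f - P (Ainv ip0 J a f)) * n0 f"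
proof -
  obtain K where K: "\<forall>f. nH (Ainv ip0 J a f) \<le> K * n0 f" using Ainv_bdd by blast
  have "nH (Ainv ip0 J a f - P (Ainv ip0 J a f)) \<le> K * n0 f" for f using assms[of "Ainv ip0 J a f"] K by (meson order_trans)
  then show ?thesis by (intro opnorm_bound[where K=K] ipn_nonneg[OF i0] ipn_nonneg[OF iH])
qed

end


lemma fd_sub: assumes "fd_csubspace S" shows "cv.subspace S"
  using fd_span[OF assms] by (metis cv.subspace_span)

lemma orth_proj_ex1:
  assumes ip: "inner_prod ip" and S: "fd_csubspace S"
  shows "\<exists>!w. w \<in> S \<and> (\<forall>s\<in>S. ip (u - w) s = 0)"
proof -
  obtain B where B: "finite B" "S = cv.span B" using fd_span[OF S] by blast
  have ses: "sesq ip" by (rule ip_sesq[OF ip])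
  have nd: "\<forall>v\<in>cv.span B. (\<forall>w\<in>cv.span B. ip w v = 0) \<longrightarrow> v = 0"
    using ip_pos[OF ip] by force
  obtain w where w: "w \<in> S" "\<forall>s\<in>S. ip s w = ip s u"
    using riesz_fd[OF ses B(1) nd, of "\<lambda>s. ip s u"] sesqD[OF ses] B(2) by auto
  have ex: "w \<in> S \<and> (\<forall>s\<in>S. ip (u - w) s = 0)"
  proof (intro conjI ballI)
    fix s assume "s \<in> S"
    have "ip (u - w) s = cnj (ip s (u - w))" by (rule ip_sym[OF ip])
    also have "\<dots> = 0" using w(2) \<open>s \<in> S\<close> by (simp add: sesq_more[OF ses])
    finally show "ip (u - w) s = 0" .
  qed (fact w(1))
  have un: "w1 = w2" if "w1 \<in> S \<and> (\<forall>s\<in>S. ip (u - w1) s = 0)" "w2 \<in> S \<and> (\<forall>s\<in>S. ip (u - w2) s = 0)" for w1 w2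
  proof -
    have d: "w2 - w1 \<in> S" using that cv.subspace_diff[OF fd_sub[OF S]] by blast
    have "ip (w2 - w1) (w2 - w1) = ip (u - w1) (w2 - w1) - ip (u - w2) (w2 - w1)"
      by (simp add: sesq_more[OF ses])
    also have "\<dots> = 0" using that d by simp
    finally show ?thesis using ip_pos[OF ip, of "w2 - w1"] by (cases "w2 - w1 = 0") auto
  qed
  show ?thesis using ex un by blast
qed

lemma orth_proj_prop:
  assumes "inner_prod ip" "fd_csubspace S"
  shows "orth_proj ip S u \<in> S" "\<forall>s\<in>S. ip (u - orth_proj ip S u) s = 0"
  using theI'[OF orth_proj_ex1[OF assms, of u]] unfolding orth_proj_def by auto

lemma orth_proj_id:
  assumes ip: "inner_prod ip" and S: "fd_csubspace S" and "v \<in> S"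
  shows "orth_proj ip S v = v"
proof -
  have "v \<in> S \<and> (\<forall>s\<in>S. ip (v - v) s = 0)" using assms(3) sesq_more[OF ip_sesq[OF ip]] by simp
  then show ?thesis using orth_proj_ex1[OF ip S, of v] orth_proj_prop[OF ip S, of v] by blast
qed

lemma orth_proj_contr:
  assumes ip: "inner_prod ip" and S: "fd_csubspace S"
  shows "ipnorm ip (u - orth_proj ip S u) \<le> ipnorm ip u"
proof -
  define p where "p = orth_proj ip S u"
  define e where "e = u - p"
  have ep: "ip e p = 0" using orth_proj_prop[OF ip S, of u] unfolding e_def p_def by blast
  have pe: "ip p e = 0" using ip_sym[OF ip, of e p] ep by simp
  have "ip u u = ip (e + p) (e + p)" unfolding e_def by simp
  also have "\<dots> = ip e e + ip p p" using ep pe by (simp add: sesqD[OF ip_sesq[OF ip]])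
  finally have "(ipnorm ip u)\<^sup>2 = (ipnorm ip e)\<^sup>2 + (ipnorm ip p)\<^sup>2" by (simp add: ipn_sq[OF ip])
  then have "(ipnorm ip e)\<^sup>2 \<le> (ipnorm ip u)\<^sup>2" by simp
  then show ?thesis unfolding e_def p_def using ipn_nonneg[OF ip] by (meson power2_le_imp_le)
qed

lemma galerkin_ex:
  assumes ses: "sesq a" and S: "fd_csubspace S"
    and nd: "\<forall>v\<in>S. (\<forall>w\<in>S. a v w = 0) \<longrightarrow> v = 0"
  shows "\<exists>xh\<in>S. \<forall>w\<in>S. a (x - xh) w = 0"
proof -
  obtain B where B: "finite B" "S = cv.span B" using fd_span[OF S] by blast
  define \<psi> where "\<psi> u v = cnj (a v u)" for u v
  have sp: "sesq \<psi>" unfolding sesq_def \<psi>_def by (simp add: sesqD[OF ses])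
  have nd2: "\<forall>v\<in>cv.span B. (\<forall>w\<in>cv.span B. \<psi> w v = 0) \<longrightarrow> v = 0"
    using nd B(2) unfolding \<psi>_def by simp
  obtain xh where xh: "xh \<in> S" "\<forall>w\<in>S. \<psi> w xh = cnj (a x w)"
    using riesz_fd[OF sp B(1) nd2, of "\<lambda>w. cnj (a x w)"] B(2) by (auto simp: sesqD[OF ses])
  have "\<forall>w\<in>S. a (x - xh) w = 0" using xh(2) unfolding \<psi>_def by (simp add: sesq_more[OF ses])
  then show ?thesis using xh(1) by blast
qed

lemma adjoint_rep:
  assumes ses: "sesq a" and ip: "inner_prod ip" and S: "fd_csubspace S"
    and nd: "\<forall>v\<in>S. (\<forall>w\<in>S. a w v = 0) \<longrightarrow> v = 0"
  shows "\<exists>v\<in>S. \<forall>w\<in>S. a w v = ip w u"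
proof -
  obtain B where B: "finite B" "S = cv.span B" using fd_span[OF S] by blast
  show ?thesis using riesz_fd[OF ses B(1), of "\<lambda>w. ip w u"] nd B(2) sesqD[OF ip_sesq[OF ip]] by auto
qed


lemma main_fixed:
  fixes ipH :: "'h::cvector \<Rightarrow> 'h \<Rightarrow> complex" and ip0 :: "'g::cvector \<Rightarrow> 'g \<Rightarrow> complex"
  assumes std: "standing_assms ipH ip0 J D b minv epsop a CG1 CG2"
    and inv: "form_invertible ipH a"
    and V: "fd_csubspace V"
    and qo: "\<forall>u uh. uh \<in> V \<and> (\<forall>vh\<in>V. a (u - uh) vh = 0) \<longrightarrow>
               ipnorm ipH (u - uh) \<le> Q * ipnorm ipH (u - orth_proj ipH V u)"
    and adj: "opnorm (ipnorm ip0) (ipnorm ipH) (\<lambda>f. Ainv ip0 J a f - orth_proj ipH V (Ainv ip0 J a f)) \<le> A"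
    and Q0: "Q \<ge> 0"
    and G: "Ainv_norm ipH ip0 J a + Q * A \<le> G" and G0': "G \<ge> 0"
  shows "ereal (1 / (inverse CG1 * (1 + CG2 * G)))
           \<le> (INF uh\<in>V - {0}. SUP vh\<in>V - {0}. ereal (cmod (a uh vh) / (ipnorm ipH uh * ipnorm ipH vh)))"
proof -
  let ?nH = "ipnorm ipH" and ?n0 = "ipnorm ip0"
  let ?N = "Ainv_norm ipH ip0 J a"
  let ?P = "orth_proj ipH V"
  let ?Ai = "Ainv ip0 J a"
  have iH: "inner_prod ipH" and i0: "inner_prod ip0" using iH[OF std inv] i0[OF std inv] .
  have ses: "sesq a" using a_sesq[OF std inv] .
  have CG: "CG1 > 0" "CG2 > 0" using CG[OF std inv] by auto
  have sub: "cv.subspace V" using fd_sub[OF V] .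
  have V0: "0 \<in> V" using cv.subspace_0[OF sub] .
  have nnH: "\<And>x. ?nH x \<ge> 0" and nn0: "\<And>x. ?n0 x \<ge> 0" using ipn_nonneg[OF iH] ipn_nonneg[OF i0] by auto
  have Jn: "\<And>v. ?n0 (J v) \<le> ?nH v" using Jn[OF std inv] .
  \<comment> \<open>Galerkin nondegeneracy from quasi-optimality\<close>
  have ndG: "\<forall>v\<in>V. (\<forall>w\<in>V. a v w = 0) \<longrightarrow> v = 0"
  proof (intro ballI impI)
    fix v assume v: "v \<in> V" "\<forall>w\<in>V. a v w = 0"
    then have "?nH (v - 0) \<le> Q * ?nH (v - ?P v)" using qo[rule_format, of 0 v] V0 by simp
    then have "?nH v \<le> 0" using orth_proj_id[OF iH V v(1)] by (simp add: ipn_zero[OF iH])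
    then show "v = 0" using ipn_zero_iff[OF iH] nnH by (metis order_antisym)
  qed
  have key: "CG1 * ?nH v \<le> \<beta> * (1 + CG2 * G)"
    if v: "v \<in> V" and \<beta>0: "\<beta> \<ge> 0" and \<beta>: "\<forall>w\<in>V. cmod (a w v) \<le> \<beta> * ?nH w" for v \<beta>
  proof -
    define \<xi> where "\<xi> = ?Ai (J v)"
    obtain \<xi>h where \<xi>h: "\<xi>h \<in> V" "\<forall>w\<in>V. a (\<xi> - \<xi>h) w = 0" using galerkin_ex[OF ses V ndG] by blast
    have e1: "?nH (\<xi> - \<xi>h) \<le> Q * ?nH (\<xi> - ?P \<xi>)" using qo \<xi>h by blast
    have e2: "?nH (\<xi> - ?P \<xi>) \<le> A * ?n0 (J v)"
    proof -
      have "?nH (\<xi> - ?P \<xi>) \<le> opnorm ?n0 ?nH (\<lambda>f. ?Ai f - ?P (?Ai f)) * ?n0 (J v)"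
        unfolding \<xi>_def by (rule Ainv_proj_bound[OF std inv orth_proj_contr[OF iH V]])
      also have "\<dots> \<le> A * ?n0 (J v)" using adj nn0 by (rule mult_right_mono)
      finally show ?thesis .
    qed
    have e3: "?nH \<xi> \<le> ?N * ?n0 (J v)" unfolding \<xi>_def by (rule Ainv_norm_bound[OF std inv])
    have "?nH \<xi>h \<le> ?nH \<xi> + ?nH (\<xi> - \<xi>h)"
      using ipn_triangle[OF iH, of \<xi> "- (\<xi> - \<xi>h)"] ipn_minus[OF iH, of "\<xi> - \<xi>h"] by simp
    also have "\<dots> \<le> ?N * ?n0 (J v) + Q * (A * ?n0 (J v))"
      using e1 e2 e3 Q0 by (meson add_mono mult_left_mono order_trans)
    also have "\<dots> = (?N + Q * A) * ?n0 (J v)" by (simp add: algebra_simps)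
    also have "\<dots> \<le> G * ?n0 (J v)" using G nn0 by (rule mult_right_mono)
    finally have xh: "?nH \<xi>h \<le> G * ?n0 (J v)" .
    have "a \<xi>h v = a \<xi> v" using \<xi>h(2) v by (simp add: sesq_more[OF ses])
    also have "\<dots> = ip0 (J v) (J v)" unfolding \<xi>_def by (rule Ainv_prop[OF std inv])
    finally have "(?n0 (J v))\<^sup>2 = cmod (a \<xi>h v)" using ip_self_eq[OF i0, of "J v"] by (simp add: norm_power)
    also have "\<dots> \<le> \<beta> * ?nH \<xi>h" using \<beta> \<xi>h(1) by blast
    also have "\<dots> \<le> \<beta> * (G * ?n0 (J v))" using xh \<beta>0 by (rule mult_left_mono)
    also have "\<dots> \<le> \<beta> * (G * ?nH v)" using Jn[of v] \<beta>0 G0' by (intro mult_left_mono) auto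
    finally have s0: "(?n0 (J v))\<^sup>2 \<le> \<beta> * G * ?nH v" by simp
    have "CG1 * (?nH v)\<^sup>2 \<le> cmod (a v v + complex_of_real (CG2 * (?n0 (J v))\<^sup>2))" by (rule garding[OF std inv])
    also have "\<dots> \<le> cmod (a v v) + CG2 * (?n0 (J v))\<^sup>2"
    proof -
      have "cmod (complex_of_real (CG2 * (?n0 (J v))\<^sup>2)) = CG2 * (?n0 (J v))\<^sup>2"
        using CG by (simp only: norm_of_real) simp
      then show ?thesis using norm_triangle_ineq[of "a v v" "complex_of_real (CG2 * (?n0 (J v))\<^sup>2)"] by linarith
    qed
    also have "\<dots> \<le> \<beta> * ?nH v + CG2 * (\<beta> * G * ?nH v)"
      using \<beta> v s0 CG by (intro add_mono mult_left_mono) auto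
    also have "\<dots> = (\<beta> * (1 + CG2 * G)) * ?nH v" by (simp add: algebra_simps)
    finally have fin: "CG1 * (?nH v)\<^sup>2 \<le> (\<beta> * (1 + CG2 * G)) * ?nH v" .
    show ?thesis
    proof (cases "?nH v = 0")
      case True then show ?thesis using \<beta>0 CG G0' by simp
    next
      case False then have "?nH v > 0" using nnH[of v] by simp
      then show ?thesis using fin by (simp add: power2_eq_square)
    qed
  qed
  have Kc: "1 + CG2 * G > 0" using CG G0' by (simp add: add_pos_nonneg)
  have ndA: "\<forall>v\<in>V. (\<forall>w\<in>V. a w v = 0) \<longrightarrow> v = 0"
  proof (intro ballI impI)
    fix v assume v: "v \<in> V" "\<forall>w\<in>V. a w v = 0"
    then have "CG1 * ?nH v \<le> 0 * (1 + CG2 * G)" by (intro key) auto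
    then have "?nH v \<le> 0" using CG by (simp add: mult_le_0_iff)
    then show "v = 0" using ipn_zero_iff[OF iH] nnH by (metis order_antisym)
  qed
  show ?thesis
  proof (rule INF_greatest)
    fix u assume u: "u \<in> V - {0}"
    obtain v where v: "v \<in> V" "\<forall>w\<in>V. a w v = ipH w u" using adjoint_rep[OF ses iH V ndA] by blast
    have kv: "CG1 * ?nH v \<le> ?nH u * (1 + CG2 * G)"
    proof (rule key[OF v(1) nnH])
      show "\<forall>w\<in>V. cmod (a w v) \<le> ?nH u * ?nH w"
        using v(2) cauchy_schwarz[OF iH] by (simp add: mult.commute)
    qed
    have u0: "?nH u > 0" using u ipn_zero_iff[OF iH, of u] nnH[of u] by auto
    have "v \<noteq> 0"
    proof
      assume "v = 0"
      then have "ipH u u = 0" using v(2) u sesq_more(2)[OF ses] by force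
      then show False using u ip_pos[OF iH, of u] by simp
    qed
    then have v0: "?nH v > 0" using ipn_zero_iff[OF iH, of v] nnH[of v] by auto
    have "cmod (a u v) = (?nH u)\<^sup>2" using v(2) u ip_self_eq[OF iH, of u] by (simp add: norm_power)
    then have r: "cmod (a u v) / (?nH u * ?nH v) = ?nH u / ?nH v" using u0 by (simp add: power2_eq_square)
    have "1 / (inverse CG1 * (1 + CG2 * G)) = CG1 / (1 + CG2 * G)" by (simp add: field_simps)
    also have "\<dots> \<le> ?nH u / ?nH v" using kv Kc v0 by (simp add: divide_le_eq le_divide_eq mult.commute)
    finally have "ereal (1 / (inverse CG1 * (1 + CG2 * G))) \<le> ereal (cmod (a u v) / (?nH u * ?nH v))"
      unfolding r by simp
    then show "ereal (1 / (inverse CG1 * (1 + CG2 * G)))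
        \<le> (SUP vh\<in>V - {0}. ereal (cmod (a u vh) / (?nH u * ?nH vh)))"
      using v(1) \<open>v \<noteq> 0\<close> by (intro SUP_upper2[of v]) auto
  qed
qed


theorem corollary4p10:
  fixes ipH :: "real \<Rightarrow> 'h::cvector \<Rightarrow> 'h \<Rightarrow> complex"
    and ip0 :: "real \<Rightarrow> 'g::cvector \<Rightarrow> 'g \<Rightarrow> complex"
    and J D :: "real \<Rightarrow> 'h \<Rightarrow> 'g"
    and b a :: "real \<Rightarrow> 'h \<Rightarrow> 'h \<Rightarrow> complex"
    and minv epsop :: "real \<Rightarrow> 'g \<Rightarrow> 'g"
    and CG1 CG2 :: "real \<Rightarrow> real"
    and p :: nat
    and Vh :: "real \<Rightarrow> 'h set"
    and C1 C2 C3 :: real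
  assumes std: "\<forall>k>0. standing_assms (ipH k) (ip0 k) (J k) (D k) (b k) (minv k) (epsop k) (a k) (CG1 k) (CG2 k)"
    and inv: "\<forall>k>0. form_invertible (ipH k) (a k)"
    and lower: "\<forall>k0>0. \<exists>c>0. \<forall>k\<ge>k0. c \<le> Ainv_norm (ipH k) (ip0 k) (J k) (a k)"
    and p: "p \<ge> 1"
    and Vh: "\<forall>h>0. fd_csubspace (Vh h)"
    and C: "C1 > 0" "C2 > 0" "C3 > 0"
    and qo: "\<forall>k>0. \<forall>h>0. (k * h) ^ (2 * p) * Ainv_norm (ipH k) (ip0 k) (J k) (a k) \<le> C1 \<longrightarrow>
               (\<forall>u uh. uh \<in> Vh h \<and> (\<forall>vh\<in>Vh h. a k (u - uh) vh = 0) \<longrightarrow>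
                  ipnorm (ipH k) (u - uh) \<le> C2 * (1 + (k * h) ^ p * Ainv_norm (ipH k) (ip0 k) (J k) (a k))
                     * ipnorm (ipH k) (u - orth_proj (ipH k) (Vh h) u))"
    and adj: "\<forall>k>0. \<forall>h>0. (k * h) ^ (2 * p) * Ainv_norm (ipH k) (ip0 k) (J k) (a k) \<le> C1 \<longrightarrow>
               opnorm (ipnorm (ip0 k)) (ipnorm (ipH k))
                 (\<lambda>f. Ainv (ip0 k) (J k) (a k) f - orth_proj (ipH k) (Vh h) (Ainv (ip0 k) (J k) (a k) f))
               \<le> C3 * (k * h + (k * h) ^ p * Ainv_norm (ipH k) (ip0 k) (J k) (a k))"
  shows "\<forall>k0>0. \<forall>\<epsilon>. 0 < \<epsilon> \<and> \<epsilon> \<le> C1 \<longrightarrow>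
           (\<exists>C4>0. \<forall>k\<ge>k0. \<forall>h>0.
              (k * h) ^ (2 * p) * Ainv_norm (ipH k) (ip0 k) (J k) (a k) \<le> \<epsilon> \<longrightarrow>
              ereal (1 / (inverse (CG1 k) * (1 + CG2 k * (1 + C2 * C3 * C4) * Ainv_norm (ipH k) (ip0 k) (J k) (a k))))
              \<le> (INF uh\<in>Vh h - {0}. SUP vh\<in>Vh h - {0}.
                    ereal (cmod (a k uh vh) / (ipnorm (ipH k) uh * ipnorm (ipH k) vh))))"
proof (intro allI impI)
  fix k0 :: real and \<epsilon> :: real
  assume k0: "k0 > 0" and e: "0 < \<epsilon> \<and> \<epsilon> \<le> C1"
  obtain c where c: "c > 0" "\<forall>k\<ge>k0. c \<le> Ainv_norm (ipH k) (ip0 k) (J k) (a k)" using lower k0 by blast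
  define m where "m = max 1 (\<epsilon> / c)"
  define q where "q = (\<epsilon> / c + 1) / 2"
  define C4 where "C4 = m / c + q + m * q + \<epsilon>"
  have m1: "m \<ge> 1" unfolding m_def by simp
  have q0: "q > 0" unfolding q_def using e c(1) by (simp add: add_pos_pos)
  have C4pos: "C4 > 0" unfolding C4_def using m1 q0 e c by (simp add: add_pos_pos)
  show "\<exists>C4>0. \<forall>k\<ge>k0. \<forall>h>0.
              (k * h) ^ (2 * p) * Ainv_norm (ipH k) (ip0 k) (J k) (a k) \<le> \<epsilon> \<longrightarrow>
              ereal (1 / (inverse (CG1 k) * (1 + CG2 k * (1 + C2 * C3 * C4) * Ainv_norm (ipH k) (ip0 k) (J k) (a k))))
              \<le> (INF uh\<in>Vh h - {0}. SUP vh\<in>Vh h - {0}.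
                    ereal (cmod (a k uh vh) / (ipnorm (ipH k) uh * ipnorm (ipH k) vh)))"
  proof (intro exI[of _ C4] conjI allI impI C4pos)
    fix k h :: real
    assume k: "k0 \<le> k" and h: "0 < h"
      and sm: "(k * h) ^ (2 * p) * Ainv_norm (ipH k) (ip0 k) (J k) (a k) \<le> \<epsilon>"
    define N where "N = Ainv_norm (ipH k) (ip0 k) (J k) (a k)"
    define x where "x = k * h"
    define t where "t = x ^ p * N"
    have kp: "k > 0" using k k0 by simp
    have x0: "x > 0" unfolding x_def using kp h by simp
    have Nc: "N \<ge> c" unfolding N_def using c k by blast
    have N0: "N > 0" using Nc c by simp
    have sm': "x ^ (2 * p) * N \<le> \<epsilon>" using sm unfolding x_def N_def .
    have xC1: "(k * h) ^ (2 * p) * Ainv_norm (ipH k) (ip0 k) (J k) (a k) \<le> C1" using sm e by simp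
    have t0: "t \<ge> 0" unfolding t_def using x0 N0 by simp
    have xm: "x \<le> m"
    proof (cases "x \<le> 1")
      case True then show ?thesis using m1 by simp
    next
      case False
      have "x = x ^ 1" by simp
      also have "\<dots> \<le> x ^ (2 * p)" using False p by (intro power_increasing) auto
      also have "\<dots> \<le> \<epsilon> / N" using sm' N0 by (simp add: le_divide_eq)
      also have "\<dots> \<le> \<epsilon> / c" using Nc c e by (intro divide_left_mono) auto
      also have "\<dots> \<le> m" unfolding m_def by simp
      finally show ?thesis .
    qed
    have t2: "t\<^sup>2 \<le> \<epsilon> * N"
    proof -
      have "t\<^sup>2 = (x ^ (2 * p) * N) * N" unfolding t_def by (simp add: power_mult_distrib power_mult power2_eq_square)
      also have "\<dots> \<le> \<epsilon> * N" using sm' N0 by (intro mult_right_mono) auto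
      finally show ?thesis .
    qed
    have tq: "t \<le> q * N"
    proof -
      have "2 * t * N \<le> t\<^sup>2 + N\<^sup>2" using sum_squares_bound[of t N] by (simp add: power2_eq_square algebra_simps)
      also have "\<dots> \<le> \<epsilon> * N + N\<^sup>2" using t2 by simp
      finally have "2 * t * N \<le> (\<epsilon> + N) * N" by (simp add: power2_eq_square algebra_simps)
      then have "2 * t \<le> \<epsilon> + N" using N0 by simp
      moreover have "\<epsilon> \<le> \<epsilon> / c * N" using Nc c e by (simp add: field_simps)
      ultimately show ?thesis unfolding q_def by (simp add: field_simps)
    qed
    have xN: "x \<le> m / c * N"
    proof -
      have "m \<le> m / c * N" using Nc c m1 by (simp add: field_simps)
      then show ?thesis using xm by simp
    qed
    have xt: "x * t \<le> m * (q * N)" using xm tq x0 t0 m1 by (intro mult_mono) auto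
    have main: "(1 + t) * (x + t) \<le> C4 * N"
    proof -
      have "(1 + t) * (x + t) = x + t + x * t + t\<^sup>2" by (simp add: power2_eq_square algebra_simps)
      also have "\<dots> \<le> m / c * N + q * N + m * (q * N) + \<epsilon> * N" using xN tq xt t2 by linarith
      also have "\<dots> = C4 * N" unfolding C4_def by (simp add: algebra_simps)
      finally show ?thesis .
    qed
    have G: "N + C2 * (1 + t) * (C3 * (x + t)) \<le> (1 + C2 * C3 * C4) * N"
    proof -
      have "C2 * (1 + t) * (C3 * (x + t)) = (C2 * C3) * ((1 + t) * (x + t))" by (simp add: algebra_simps)
      also have "\<dots> \<le> (C2 * C3) * (C4 * N)" using main C by (intro mult_left_mono) auto
      finally show ?thesis by (simp add: algebra_simps)
    qed
    have r: "ereal (1 / (inverse (CG1 k) * (1 + CG2 k * ((1 + C2 * C3 * C4) * N))))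
           \<le> (INF uh\<in>Vh h - {0}. SUP vh\<in>Vh h - {0}. ereal (cmod (a k uh vh) / (ipnorm (ipH k) uh * ipnorm (ipH k) vh)))"
    proof (rule main_fixed[where Q = "C2 * (1 + t)" and A = "C3 * (x + t)"])
      show "standing_assms (ipH k) (ip0 k) (J k) (D k) (b k) (minv k) (epsop k) (a k) (CG1 k) (CG2 k)" using std kp by blast
      show "form_invertible (ipH k) (a k)" using inv kp by blast
      show "fd_csubspace (Vh h)" using Vh h by blast
      show "\<forall>u uh. uh \<in> Vh h \<and> (\<forall>vh\<in>Vh h. a k (u - uh) vh = 0) \<longrightarrow>
               ipnorm (ipH k) (u - uh) \<le> C2 * (1 + t) * ipnorm (ipH k) (u - orth_proj (ipH k) (Vh h) u)"
        using qo kp h xC1 unfolding t_def x_def N_def by blast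
      show "opnorm (ipnorm (ip0 k)) (ipnorm (ipH k))
                 (\<lambda>f. Ainv (ip0 k) (J k) (a k) f - orth_proj (ipH k) (Vh h) (Ainv (ip0 k) (J k) (a k) f))
               \<le> C3 * (x + t)"
        using adj kp h xC1 unfolding t_def x_def N_def by blast
      show "C2 * (1 + t) \<ge> 0" using C t0 by simp
      show "Ainv_norm (ipH k) (ip0 k) (J k) (a k) + C2 * (1 + t) * (C3 * (x + t)) \<le> (1 + C2 * C3 * C4) * N"
        using G unfolding N_def .
      show "(1 + C2 * C3 * C4) * N \<ge> 0" using C C4pos N0 by simp
    qed
    then show "ereal (1 / (inverse (CG1 k) * (1 + CG2 k * (1 + C2 * C3 * C4) * Ainv_norm (ipH k) (ip0 k) (J k) (a k))))
              \<le> (INF uh\<in>Vh h - {0}. SUP vh\<in>Vh h - {0}.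
                    ereal (cmod (a k uh vh) / (ipnorm (ipH k) uh * ipnorm (ipH k) vh)))"
      unfolding N_def by (simp add: mult.assoc)
  qed
qed

end
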